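(* In the cost setting and for the subroutine CSE described in the context, assume the event $G$ holds and the threshold satisfies $B\ge\mu^*$. Then CSE does not return Fail, and the optimal arm $i^*$ is never eliminated.
   Context: Delay-as-payoff bandit: $K$ arms, horizon $T$, maximum delay $D\in\mathbb{N}$. Arm $i$ has an unknown distribution $\mathcal{D}_i$ on $\{0,\dots,D\}$; at step $t$ the agent picks $i_t$ based on observed feedback, $d_t\sim\mathcal{D}_{i_t}$ is drawn independently and revealed only at time $t+d_t$; the cost is $c_t=d_t/D$ (to be minimized). Let $\mu(i)=\mathbb{E}_{X\sim\mathcal{D}_i}[X/D]$, $d(i)=D\mu(i)$, $\mu^*=\min_i\mu(i)$ attained at a unique arm $i^*$. Notation at time $t$: $n_t(i)$ is the number of steps $s\le t$ with $i_s=i$; $\hat\mu_t(i)=\frac{1}{n_t(i)}\sum_{s\le t,\,i_s=i}c_s$ (empirical mean of all plays, including not-yet-observed ones); $M_t(i)=\{s\le t: i_s=i,\ s+d_s\ge t\}$, $m_t(i)=|M_t(i)|$; $\mathcal{O}_t(i)=\{s\le t: i_s=i,\ s+d_s<t\}$; $F_t(i)=\{s\le t-D: i_s=i\}$; $a\vee b=\max\{a,b\}$; $S_t$ is the active set at time $t$. CSE with inputs $T$, $K$, $D$, threshold $B$: start with $t=1$, $S=[K]$. While $t<T$: play each arm of $S$ once (round robin), observe arriving feedback, set $t\leftarrow t+|S|$; for each $i\in S$ compute $\hat\mu^-_t(i)=\frac{1}{n_t(i)}\big(\sum_{s\in M_t(i)}\frac{t-s}{D}+\sum_{s\in\mathcal{O}_t(i)}c_s\big)$,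 $L^1_t(i)=\hat\mu^-_t(i)-\sqrt{2\log T/n_t(i)}$; $\hat\mu^F_t(i)=\frac{1}{|F_t(i)|\vee1}\sum_{s\in F_t(i)}c_s$, $L^2_t(i)=\hat\mu^F_t(i)-\sqrt{2\log T/(|F_t(i)|\vee1)}$; $L^3_t(i)=\frac{|S|}{D}\big(\frac{m_t(i)}{2}-8\log T-1\big)$; $LCB_t(i)=\max\{L^1_t(i),L^2_t(i),L^3_t(i)\}$, $UCB_t(i)=\hat\mu^F_t(i)+\sqrt{2\log T/(|F_t(i)|\vee1)}$. Then remove from $S$ every arm $i$ for which some $j\in S$ has $\min\{UCB_t(j),B\}<LCB_t(i)$; if $S=\emptyset$ return (Fail, $t$). If the loop ends return (Success, $t$). Event $G$: for every $t\in[T]$ and every arm $i\in[K]$, $m_t(i)\le\frac{2d(i)}{|S_t|}+16\log T+2$ and $|\mu(i)-\hat\mu_t(i)|\le\sqrt{2\log T/n_t(i)}$. *)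

theory Defs
  imports "HOL-Probability.Probability"
begin

text \<open>Arms are 1..K, times are 1,2,...  A history h maps a time s to Some i if arm i
  was played at time s (None otherwise).  The delay realisation is dl s i: the delay
  that arm i produces when played at time s (drawn from the arm distribution).\<close>

type_synonym hist = "nat \<Rightarrow> nat option"

definition mu :: "(nat \<Rightarrow> nat pmf) \<Rightarrow> nat \<Rightarrow> nat \<Rightarrow> real" where
  "mu Dist D i = measure_pmf.expectation (Dist i) (\<lambda>x. real x / real D)"

definition dmean :: "(nat \<Rightarrow> nat pmf) \<Rightarrow> nat \<Rightarrow> nat \<Rightarrow> real" where
  "dmean Dist D i = real D * mu Dist D i"

definition plays :: "hist \<Rightarrow> nat \<Rightarrow> nat \<Rightarrow> nat set" where
  "plays h t i = {s. s \<le> t \<and> h s = Some i}"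

definition ncnt :: "hist \<Rightarrow> nat \<Rightarrow> nat \<Rightarrow> nat" where
  "ncnt h t i = card (plays h t i)"

definition cost :: "(nat \<Rightarrow> nat \<Rightarrow> nat) \<Rightarrow> nat \<Rightarrow> hist \<Rightarrow> nat \<Rightarrow> real" where
  "cost dl D h s = real (dl s (the (h s))) / real D"

definition muhat :: "(nat \<Rightarrow> nat \<Rightarrow> nat) \<Rightarrow> nat \<Rightarrow> hist \<Rightarrow> nat \<Rightarrow> nat \<Rightarrow> real" where
  "muhat dl D h t i = (\<Sum>s\<in>plays h t i. cost dl D h s) / real (ncnt h t i)"

definition Mset :: "(nat \<Rightarrow> nat \<Rightarrow> nat) \<Rightarrow> hist \<Rightarrow> nat \<Rightarrow> nat \<Rightarrow> nat set" where
  "Mset dl h t i = {s \<in> plays h t i. t \<le> s + dl s i}"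

definition Oset :: "(nat \<Rightarrow> nat \<Rightarrow> nat) \<Rightarrow> hist \<Rightarrow> nat \<Rightarrow> nat \<Rightarrow> nat set" where
  "Oset dl h t i = {s \<in> plays h t i. s + dl s i < t}"

text \<open>F_t(i) = {s <= t - D : i_s = i}, with t - D read over the integers.\<close>
definition Fset :: "nat \<Rightarrow> hist \<Rightarrow> nat \<Rightarrow> nat \<Rightarrow> nat set" where
  "Fset D h t i = {s. s + D \<le> t \<and> h s = Some i}"

definition muminus :: "(nat \<Rightarrow> nat \<Rightarrow> nat) \<Rightarrow> nat \<Rightarrow> hist \<Rightarrow> nat \<Rightarrow> nat \<Rightarrow> real" where
  "muminus dl D h t i =
     ((\<Sum>s\<in>Mset dl h t i. real (t - s) / real D) + (\<Sum>s\<in>Oset dl h t i. cost dl D h s))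
       / real (ncnt h t i)"

definition L1 :: "nat \<Rightarrow> (nat \<Rightarrow> nat \<Rightarrow> nat) \<Rightarrow> nat \<Rightarrow> hist \<Rightarrow> nat \<Rightarrow> nat \<Rightarrow> real" where
  "L1 T dl D h t i = muminus dl D h t i - sqrt (2 * ln (real T) / real (ncnt h t i))"

definition muF :: "(nat \<Rightarrow> nat \<Rightarrow> nat) \<Rightarrow> nat \<Rightarrow> hist \<Rightarrow> nat \<Rightarrow> nat \<Rightarrow> real" where
  "muF dl D h t i = (\<Sum>s\<in>Fset D h t i. cost dl D h s) / real (max (card (Fset D h t i)) 1)"

definition L2 :: "nat \<Rightarrow> (nat \<Rightarrow> nat \<Rightarrow> nat) \<Rightarrow> nat \<Rightarrow> hist \<Rightarrow> nat \<Rightarrow> nat \<Rightarrow> real" where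
  "L2 T dl D h t i = muF dl D h t i
      - sqrt (2 * ln (real T) / real (max (card (Fset D h t i)) 1))"

definition L3 :: "nat \<Rightarrow> (nat \<Rightarrow> nat \<Rightarrow> nat) \<Rightarrow> nat \<Rightarrow> nat set \<Rightarrow> hist \<Rightarrow> nat \<Rightarrow> nat \<Rightarrow> real" where
  "L3 T dl D S h t i = real (card S) / real D
      * (real (card (Mset dl h t i)) / 2 - 8 * ln (real T) - 1)"

definition LCB :: "nat \<Rightarrow> (nat \<Rightarrow> nat \<Rightarrow> nat) \<Rightarrow> nat \<Rightarrow> nat set \<Rightarrow> hist \<Rightarrow> nat \<Rightarrow> nat \<Rightarrow> real" where
  "LCB T dl D S h t i = max (L1 T dl D h t i) (max (L2 T dl D h t i) (L3 T dl D S h t i))"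

definition UCB :: "nat \<Rightarrow> (nat \<Rightarrow> nat \<Rightarrow> nat) \<Rightarrow> nat \<Rightarrow> hist \<Rightarrow> nat \<Rightarrow> nat \<Rightarrow> real" where
  "UCB T dl D h t i = muF dl D h t i
      + sqrt (2 * ln (real T) / real (max (card (Fset D h t i)) 1))"

text \<open>State of CSE: (current time t, active set S, history, failed flag).
  When Fail is returned the flag is set and the (last nonempty) active set is kept.\<close>
type_synonym cse_st = "nat \<times> nat set \<times> hist \<times> bool"

definition st_time :: "cse_st \<Rightarrow> nat" where "st_time st = fst st"
definition st_set :: "cse_st \<Rightarrow> nat set" where "st_set st = fst (snd st)"
definition st_hist :: "cse_st \<Rightarrow> hist" where "st_hist st = fst (snd (snd st))"
definition st_failed :: "cse_st \<Rightarrow> bool" where "st_failed st = snd (snd (snd st))"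

definition cse_step ::
  "nat \<Rightarrow> nat \<Rightarrow> real \<Rightarrow> (nat \<Rightarrow> nat \<Rightarrow> nat) \<Rightarrow> (nat set \<Rightarrow> nat list) \<Rightarrow> cse_st \<Rightarrow> cse_st" where
  "cse_step T D B dl enum st =
     (let t = st_time st; S = st_set st; h = st_hist st; L = enum S;
          h' = (\<lambda>s. if t \<le> s \<and> s < t + card S \<and> s \<le> T then Some (L ! (s - t)) else h s);
          t' = t + card S;
          S' = {i \<in> S. \<not> (\<exists>j\<in>S. min (UCB T dl D h' t' j) B < LCB T dl D S h' t' i)}
      in if S' = {} then (t', S, h', True) else (t', S', h', False))"

primrec cse_state ::
  "nat \<Rightarrow> nat \<Rightarrow> nat \<Rightarrow> real \<Rightarrow> (nat \<Rightarrow> nat \<Rightarrow> nat) \<Rightarrow> (nat set \<Rightarrow> nat list) \<Rightarrow> nat \<Rightarrow> cse_st" where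
  "cse_state T K D B dl enum 0 = (1, {1..K}, (\<lambda>_. None), False)"
| "cse_state T K D B dl enum (Suc r) =
     (let st = cse_state T K D B dl enum r in
      if \<not> st_failed st \<and> st_time st < T then cse_step T D B dl enum st else st)"

text \<open>Active set S_t at time t: the set of the round during which time t is played;
  for times after termination, the last active set.\<close>
definition active_set ::
  "nat \<Rightarrow> nat \<Rightarrow> nat \<Rightarrow> real \<Rightarrow> (nat \<Rightarrow> nat \<Rightarrow> nat) \<Rightarrow> (nat set \<Rightarrow> nat list) \<Rightarrow> nat \<Rightarrow> nat set" where
  "active_set T K D B dl enum t =
     st_set (cse_state T K D B dl enum
       (LEAST r. st_failed (cse_state T K D B dl enum r)
               \<or> \<not> st_time (cse_state T K D B dl enum r) < T
               \<or> t < st_time (cse_state T K D B dl enum (Suc r))))"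

text \<open>The history of plays of the whole run (each time is played in at most one round).\<close>
definition run_hist ::
  "nat \<Rightarrow> nat \<Rightarrow> nat \<Rightarrow> real \<Rightarrow> (nat \<Rightarrow> nat \<Rightarrow> nat) \<Rightarrow> (nat set \<Rightarrow> nat list) \<Rightarrow> hist" where
  "run_hist T K D B dl enum s =
     (if \<exists>r. st_hist (cse_state T K D B dl enum r) s \<noteq> None
      then st_hist (cse_state T K D B dl enum
             (SOME r. st_hist (cse_state T K D B dl enum r) s \<noteq> None)) s
      else None)"

text \<open>Event G (the conditions with n_t(i) = 0 are vacuous: the confidence bound is
  only meaningful for arms that have been played).\<close>
definition event_G ::
  "(nat \<Rightarrow> nat pmf) \<Rightarrow> nat \<Rightarrow> nat \<Rightarrow> nat \<Rightarrow> real \<Rightarrow> (nat \<Rightarrow> nat \<Rightarrow> nat) \<Rightarrow> (nat set \<Rightarrow> nat list) \<Rightarrow> bool" where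
  "event_G Dist T K D B dl enum =
     (let h = run_hist T K D B dl enum in
      \<forall>t\<in>{1..T}. \<forall>i\<in>{1..K}.
        real (card (Mset dl h t i))
          \<le> 2 * dmean Dist D i / real (card (active_set T K D B dl enum t)) + 16 * ln (real T) + 2
        \<and> (ncnt h t i \<ge> 1 \<longrightarrow>
             \<bar>mu Dist D i - muhat dl D h t i\<bar> \<le> sqrt (2 * ln (real T) / real (ncnt h t i))))"

end

theory Submission
  imports Defs
begin

lemma mu_nonneg: "0 \<le> mu Dist D i"
  unfolding mu_def by (intro integral_nonneg_AE) simp

lemma mu_le1:
  assumes "set_pmf (Dist i) \<subseteq> {0..D}" "D \<ge> 1"
  shows "mu Dist D i \<le> 1"
  unfolding mu_def
proof (rule measure_pmf.integral_le_const)
  show "integrable (measure_pmf (Dist i)) (\<lambda>x. real x / real D)"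
    by (rule integrable_measure_pmf_finite) (use assms finite_subset in blast)
  show "AE x in measure_pmf (Dist i). real x / real D \<le> 1"
    using assms by (auto simp: AE_measure_pmf_iff)
qed

lemma step_unfold:
  "cse_step T D B dl enum (t,S,h,f) =
    (let h' = (\<lambda>s. if t \<le> s \<and> s < t + card S \<and> s \<le> T then Some (enum S ! (s - t)) else h s);
         t' = t + card S;
         S' = {i \<in> S. \<not> (\<exists>j\<in>S. min (UCB T dl D h' t' j) B < LCB T dl D S h' t' i)}
     in if S' = {} then (t', S, h', True) else (t', S', h', False))"
  unfolding cse_step_def st_time_def st_set_def st_hist_def fst_conv snd_conv Let_def ..

lemma state_Suc_cases:
  "cse_state T K D B dl enum (Suc r) = cse_state T K D B dl enum r \<or>
   (\<exists>t S h f. cse_state T K D B dl enum r = (t,S,h,f) \<and> \<not> f \<and> t < T \<and>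
      cse_state T K D B dl enum (Suc r) = cse_step T D B dl enum (t,S,h,f))"
  by (cases "cse_state T K D B dl enum r") (auto simp: Let_def st_failed_def st_time_def)

lemma inv:
  assumes "K \<ge> 1"
  shows "st_time (cse_state T K D B dl enum r) \<ge> 1 \<and> finite (st_set (cse_state T K D B dl enum r))
    \<and> st_set (cse_state T K D B dl enum r) \<noteq> {} \<and> st_set (cse_state T K D B dl enum r) \<subseteq> {1..K}
    \<and> (\<forall>s. st_hist (cse_state T K D B dl enum r) s \<noteq> None \<longrightarrow>
          1 \<le> s \<and> s < st_time (cse_state T K D B dl enum r) \<and> s \<le> T)"
proof (induction r)
  case 0
  then show ?case using assms by (simp add: st_time_def st_set_def st_hist_def)
next
  case (Suc r)
  from state_Suc_cases[of T K D B dl enum r] show ?case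
  proof
    assume "cse_state T K D B dl enum (Suc r) = cse_state T K D B dl enum r"
    then show ?thesis using Suc by simp
  next
    assume "\<exists>t S h f. cse_state T K D B dl enum r = (t,S,h,f) \<and> \<not> f \<and> t < T \<and>
      cse_state T K D B dl enum (Suc r) = cse_step T D B dl enum (t,S,h,f)"
    then obtain t S h f where e: "cse_state T K D B dl enum r = (t,S,h,f)"
      and s: "cse_state T K D B dl enum (Suc r) = cse_step T D B dl enum (t,S,h,f)" by blast
    have IH: "t \<ge> 1" "finite S" "S \<noteq> {}" "S \<subseteq> {1..K}"
      "\<And>s. h s \<noteq> None \<Longrightarrow> 1 \<le> s \<and> s < t \<and> s \<le> T"
      using Suc e by (auto simp: st_time_def st_set_def st_hist_def)
    have "card S \<ge> 1" using IH by (simp add: Suc_le_eq card_gt_0_iff)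
    have hs: "\<And>s y. h s = Some y \<Longrightarrow> s < t + card S" using IH(5) by fastforce
    show ?thesis unfolding s step_unfold Let_def using IH hs \<open>card S \<ge> 1\<close>
      by (auto simp: st_time_def st_set_def st_hist_def split: if_splits)
  qed
qed

lemma time_Suc: "st_time (cse_state T K D B dl enum r) \<le> st_time (cse_state T K D B dl enum (Suc r))"
  using state_Suc_cases[of T K D B dl enum r]
  by (auto simp: step_unfold Let_def st_time_def)

lemma time_mono: "r \<le> r' \<Longrightarrow> st_time (cse_state T K D B dl enum r) \<le> st_time (cse_state T K D B dl enum r')"
proof (induction r' rule: dec_induct)
  case (step n)
  show ?case using step(3) time_Suc[of T K D B dl enum n] by linarith
qed simp

lemma hist_Suc: "s < st_time (cse_state T K D B dl enum r) \<Longrightarrow>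
   st_hist (cse_state T K D B dl enum (Suc r)) s = st_hist (cse_state T K D B dl enum r) s"
  using state_Suc_cases[of T K D B dl enum r]
  by (auto simp: step_unfold Let_def st_time_def st_hist_def)

lemma hist_mono: "r \<le> r' \<Longrightarrow> s < st_time (cse_state T K D B dl enum r) \<Longrightarrow>
   st_hist (cse_state T K D B dl enum r') s = st_hist (cse_state T K D B dl enum r) s"
proof (induction r' rule: dec_induct)
  case (step n)
  then show ?case using hist_Suc[of s T K D B dl enum n] time_mono[of r n T K D B dl enum] by simp
qed simp

lemma failed_Suc: "st_failed (cse_state T K D B dl enum r) \<Longrightarrow> st_failed (cse_state T K D B dl enum (Suc r))"
  by (simp add: Let_def)

lemma failed_mono: "r \<le> r' \<Longrightarrow> st_failed (cse_state T K D B dl enum r) \<Longrightarrow> st_failed (cse_state T K D B dl enum r')"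
  by (induction r' rule: dec_induct) (auto intro: failed_Suc)

lemma run_hist_eq:
  assumes "K \<ge> 1" "s < st_time (cse_state T K D B dl enum r)"
  shows "run_hist T K D B dl enum s = st_hist (cse_state T K D B dl enum r) s"
proof -
  let ?h = "\<lambda>r. st_hist (cse_state T K D B dl enum r)"
  let ?t = "\<lambda>r. st_time (cse_state T K D B dl enum r)"
  have key: "?h r'' s \<noteq> None \<Longrightarrow> ?h r'' s = ?h r s" for r''
  proof (cases "r \<le> r''")
    case True then show ?thesis using hist_mono assms(2) by blast
  next
    case False
    assume "?h r'' s \<noteq> None"
    then have "s < ?t r''" using inv[OF assms(1)] by blast
    then show ?thesis using hist_mono[of r'' r s] False by simp
  qed
  show ?thesis
  proof (cases "\<exists>r. ?h r s \<noteq> None")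
    case True
    then have "?h (SOME r. ?h r s \<noteq> None) s \<noteq> None" by (rule someI_ex)
    then show ?thesis unfolding run_hist_def using True key by simp
  next
    case False then show ?thesis unfolding run_hist_def by simp
  qed
qed


lemma ln2_test: "1/2 \<le> ln (2::real)" using ln2_ge_two_thirds by simp

lemma plays_finite: "finite (plays h t i)"
  by (rule finite_subset[of _ "{..t}"]) (auto simp: plays_def)

lemma agree:
  assumes "\<And>s. s \<le> x \<Longrightarrow> h1 s = h2 s"
  shows "plays h1 x i = plays h2 x i" "ncnt h1 x i = ncnt h2 x i"
    "Mset dl h1 x i = Mset dl h2 x i" "muhat dl D h1 x i = muhat dl D h2 x i"
proof -
  show p: "plays h1 x i = plays h2 x i" using assms by (auto simp: plays_def)
  then show "ncnt h1 x i = ncnt h2 x i" by (simp add: ncnt_def)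
  show "Mset dl h1 x i = Mset dl h2 x i" using p by (simp add: Mset_def)
  have "(\<Sum>s\<in>plays h1 x i. cost dl D h1 s) = (\<Sum>s\<in>plays h2 x i. cost dl D h2 s)"
    unfolding p by (rule sum.cong) (auto simp: cost_def plays_def assms)
  then show "muhat dl D h1 x i = muhat dl D h2 x i"
    by (simp add: muhat_def ncnt_def p)
qed

lemma trunc:
  assumes "\<And>s. y < s \<Longrightarrow> s \<le> x \<Longrightarrow> h s = None" "y \<le> x"
  shows "plays h x i = plays h y i"
  unfolding plays_def
proof (intro set_eqI iffI)
  fix s assume "s \<in> {s. s \<le> x \<and> h s = Some i}"
  then have "s \<le> x" "h s = Some i" by auto
  then have "s \<le> y" using assms(1)[of s] by (cases "y < s") auto
  then show "s \<in> {s. s \<le> y \<and> h s = Some i}" using \<open>h s = Some i\<close> by simp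
qed (use assms(2) in auto)

lemma muminus_le: "muminus dl D h t i \<le> muhat dl D h t i"
proof -
  have part: "plays h t i = Mset dl h t i \<union> Oset dl h t i"
    "Mset dl h t i \<inter> Oset dl h t i = {}"
    by (auto simp: Mset_def Oset_def)
  have fin: "finite (Mset dl h t i)" "finite (Oset dl h t i)"
    using plays_finite[of h t i] part(1) by auto
  have "(\<Sum>s\<in>Mset dl h t i. real (t - s) / real D) \<le> (\<Sum>s\<in>Mset dl h t i. cost dl D h s)"
  proof (rule sum_mono)
    fix s assume "s \<in> Mset dl h t i"
    then have "h s = Some i" "t \<le> s + dl s i" by (auto simp: Mset_def plays_def)
    then show "real (t - s) / real D \<le> cost dl D h s"
      by (auto simp: cost_def intro!: divide_right_mono)
  qed
  then have "(\<Sum>s\<in>Mset dl h t i. real (t - s) / real D) + (\<Sum>s\<in>Oset dl h t i. cost dl D h s)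
      \<le> (\<Sum>s\<in>plays h t i. cost dl D h s)"
    unfolding part(1) using sum.union_disjoint[OF fin part(2), of "cost dl D h"] by simp
  then show ?thesis unfolding muminus_def muhat_def
    by (intro divide_right_mono) auto
qed

lemma Mset_sub:
  assumes "plays h x i = plays h y i" "y \<le> x"
  shows "Mset dl h x i \<subseteq> Mset dl h y i"
  using assms by (auto simp: Mset_def plays_def)

lemma Fset_eq:
  assumes "\<And>s. h s \<noteq> None \<Longrightarrow> 1 \<le> s" "Fset D h x i \<noteq> {}"
  shows "D < x \<and> Fset D h x i = plays h (x - D) i"
proof -
  obtain s where "s + D \<le> x" "h s = Some i" using assms(2) by (auto simp: Fset_def)
  then have "1 \<le> s" using assms(1) by auto
  then have "D < x" using \<open>s + D \<le> x\<close> by linarith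
  then show ?thesis by (auto simp: Fset_def plays_def)
qed


lemma round:
  fixes Dist :: "nat \<Rightarrow> nat pmf" and T K D :: nat and B :: real
    and dl :: "nat \<Rightarrow> nat \<Rightarrow> nat" and enum :: "nat set \<Rightarrow> nat list" and istar :: nat
  assumes K1: "K \<ge> 1" and D1: "D \<ge> 1"
    and supp: "\<And>i. i \<in> {1..K} \<Longrightarrow> set_pmf (Dist i) \<subseteq> {0..D}"
    and opt: "istar \<in> {1..K}" "\<And>i. i \<in> {1..K} \<Longrightarrow> i \<noteq> istar \<Longrightarrow> mu Dist D istar < mu Dist D i"
    and G: "event_G Dist T K D B dl enum"
    and B: "B \<ge> mu Dist D istar"
    and e: "cse_state T K D B dl enum r = (t,S,h,False)" and tT: "t < T" and ist: "istar \<in> S"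
    and nf: "\<And>y. y \<le> r \<Longrightarrow> \<not> st_failed (cse_state T K D B dl enum y)"
  defines "h' \<equiv> (\<lambda>s. if t \<le> s \<and> s < t + card S \<and> s \<le> T then Some (enum S ! (s - t)) else h s)"
    and "t' \<equiv> t + card S"
  shows "\<forall>j\<in>S. LCB T dl D S h' t' istar \<le> min (UCB T dl D h' t' j) B"
proof -
  let ?st = "cse_state T K D B dl enum"
  define R where "R = run_hist T K D B dl enum"
  have sucst: "?st (Suc r) = cse_step T D B dl enum (t,S,h,False)"
    using e tT by (simp add: st_failed_def st_time_def)
  have hS: "st_hist (?st (Suc r)) = h'" "st_time (?st (Suc r)) = t'"
    unfolding sucst step_unfold Let_def h'_def t'_def by (auto simp: st_hist_def st_time_def)
  have invr: "t \<ge> 1" "finite S" "S \<noteq> {}" "S \<subseteq> {1..K}"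
    using inv[OF K1, of T D B dl enum r] e by (auto simp: st_time_def st_set_def)
  have invh: "\<And>s. h' s \<noteq> None \<Longrightarrow> 1 \<le> s \<and> s < t' \<and> s \<le> T"
    using inv[OF K1, of T D B dl enum "Suc r"] hS by auto
  have cS: "card S \<ge> 1" using invr by (simp add: Suc_le_eq card_gt_0_iff)
  have Rh: "\<And>s. s < t' \<Longrightarrow> R s = h' s"
    using run_hist_eq[OF K1, of _ T D B dl enum "Suc r"] hS R_def by simp
  define \<tau> where "\<tau> = min (t' - 1) T"
  have \<tau>: "t \<le> \<tau>" "\<tau> < t'" "\<tau> \<le> T" "1 \<le> \<tau>" using tT cS invr unfolding \<tau>_def t'_def by auto
  have act: "active_set T K D B dl enum \<tau> = S"
  proof -
    have "(LEAST y. st_failed (?st y) \<or> \<not> st_time (?st y) < T \<or> \<tau> < st_time (?st (Suc y))) = r"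
    proof (rule Least_equality)
      show "st_failed (?st r) \<or> \<not> st_time (?st r) < T \<or> \<tau> < st_time (?st (Suc r))"
        using hS \<tau> by simp
    next
      fix y assume a: "st_failed (?st y) \<or> \<not> st_time (?st y) < T \<or> \<tau> < st_time (?st (Suc y))"
      show "r \<le> y"
      proof (rule ccontr)
        assume "\<not> r \<le> y"
        then have "y < r" by simp
        have "st_time (?st y) \<le> t" "st_time (?st (Suc y)) \<le> t"
          using time_mono[of y r T K D B dl enum] time_mono[of "Suc y" r T K D B dl enum] \<open>y<r\<close> e
          by (auto simp: st_time_def)
        then show False using a nf[of y] \<open>y<r\<close> tT \<tau> by auto
      qed
    qed
    then show ?thesis unfolding active_set_def using e by (simp add: st_set_def)
  qed
  have Gt: "\<And>x i. x \<in> {1..T} \<Longrightarrow> i \<in> {1..K} \<Longrightarrow>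
      real (card (Mset dl R x i)) \<le> 2 * dmean Dist D i / real (card (active_set T K D B dl enum x)) + 16 * ln (real T) + 2
      \<and> (ncnt R x i \<ge> 1 \<longrightarrow> \<bar>mu Dist D i - muhat dl D R x i\<bar> \<le> sqrt (2 * ln (real T) / real (ncnt R x i)))"
    using G unfolding event_G_def Let_def R_def by blast
  have ag: "\<And>x. x < t' \<Longrightarrow> (\<And>s. s \<le> x \<Longrightarrow> R s = h' s)" using Rh by auto
  have pl: "\<And>i. plays h' t' i = plays h' \<tau> i"
  proof (rule trunc)
    fix i s assume "\<tau> < s" "s \<le> t'"
    show "h' s = None"
    proof (rule ccontr)
      assume "h' s \<noteq> None"
      then have "s < t'" "s \<le> T" using invh by auto
      then show False using \<open>\<tau> < s\<close> unfolding \<tau>_def by auto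
    qed
  qed (use \<tau> in simp)
  have T2: "T \<ge> 2" using tT invr by auto
  have "ln (2::real) \<le> ln (real T)" using T2 by simp
  then have "1 \<le> 2 * ln (real T)" using ln2_ge_two_thirds by linarith
  then have lnT: "1 \<le> sqrt (2 * ln (real T))" by simp
  have lnT0: "0 \<le> ln (real T)" using T2 by simp
  have mu0: "\<And>i. 0 \<le> mu Dist D i" by (rule mu_nonneg)
  have mu1: "mu Dist D istar \<le> 1" by (rule mu_le1[of Dist istar D, OF supp[OF opt(1)] D1])
  have muj: "\<And>j. j \<in> S \<Longrightarrow> mu Dist D istar \<le> mu Dist D j"
    using opt invr by (metis less_eq_real_def subsetD)
  have Fb: "\<bar>mu Dist D j - muF dl D h' t' j\<bar> \<le> sqrt (2 * ln (real T) / real (max (card (Fset D h' t' j)) 1))"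
    if j: "j \<in> {1..K}" and ne: "Fset D h' t' j \<noteq> {}" for j
  proof -
    have FE: "D < t'" "Fset D h' t' j = plays h' (t' - D) j"
      using Fset_eq[OF _ ne] invh by auto
    define \<tau>2 where "\<tau>2 = min (t' - D) T"
    have p2: "plays h' (t' - D) j = plays h' \<tau>2 j"
    proof (rule trunc)
      fix s assume "\<tau>2 < s" "s \<le> t' - D"
      then have "T < s" unfolding \<tau>2_def by auto
      then show "h' s = None" using invh by (meson not_le)
    qed (simp add: \<tau>2_def)
    have F2: "Fset D h' t' j = plays h' \<tau>2 j" using FE p2 by simp
    obtain s where s: "s \<in> plays h' \<tau>2 j" using ne F2 by auto
    then have "1 \<le> s" "s \<le> \<tau>2" using invh by (auto simp: plays_def)
    then have t2: "\<tau>2 \<in> {1..T}" "\<tau>2 < t'" using FE D1 unfolding \<tau>2_def by auto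
    have eqs: "ncnt R \<tau>2 j = ncnt h' \<tau>2 j" "muhat dl D R \<tau>2 j = muhat dl D h' \<tau>2 j"
      using agree[OF ag[OF t2(2)]] by auto
    have cpos: "card (Fset D h' t' j) \<ge> 1"
      using ne F2 plays_finite[of h' \<tau>2 j] by (simp add: Suc_le_eq card_gt_0_iff)
    have "ncnt h' \<tau>2 j = card (Fset D h' t' j)" using F2 by (simp add: ncnt_def)
    moreover have "muF dl D h' t' j = muhat dl D h' \<tau>2 j"
      using F2 cpos by (simp add: muF_def muhat_def ncnt_def max_def cost_def)
    ultimately show ?thesis using Gt[OF t2(1) j] eqs cpos by (simp add: max_def)
  qed
  have tau1: "\<tau> \<in> {1..T}" using \<tau> by auto
  have eqt: "ncnt R \<tau> i = ncnt h' \<tau> i" "muhat dl D R \<tau> i = muhat dl D h' \<tau> i"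
       "Mset dl R \<tau> i = Mset dl h' \<tau> i" for i
    using agree[OF ag[OF \<tau>(2)]] by auto
  have L1b: "L1 T dl D h' t' istar \<le> mu Dist D istar"
  proof (cases "ncnt h' t' istar = 0")
    case True
    then show ?thesis by (simp add: L1_def muminus_def mu0)
  next
    case False
    have n: "ncnt h' t' istar = ncnt R \<tau> istar" "muhat dl D h' t' istar = muhat dl D R \<tau> istar"
    proof -
      have a: "ncnt h' t' istar = ncnt h' \<tau> istar" "muhat dl D h' t' istar = muhat dl D h' \<tau> istar"
        by (simp_all add: ncnt_def muhat_def pl)
      then show "ncnt h' t' istar = ncnt R \<tau> istar" "muhat dl D h' t' istar = muhat dl D R \<tau> istar"
        using eqt[of istar] by simp_all
    qed
    have "ncnt R \<tau> istar \<ge> 1" using False n by simp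
    then have "\<bar>mu Dist D istar - muhat dl D R \<tau> istar\<bar> \<le> sqrt (2 * ln (real T) / real (ncnt R \<tau> istar))"
      using Gt[OF tau1 opt(1)] by blast
    then show ?thesis using muminus_le[of dl D h' t' istar] n unfolding L1_def by simp
  qed
  have L2b: "L2 T dl D h' t' istar \<le> mu Dist D istar"
  proof (cases "Fset D h' t' istar = {}")
    case True
    then show ?thesis using mu0[of istar] lnT by (simp add: L2_def muF_def) (smt (verit) real_sqrt_ge_zero)
  next
    case False
    then show ?thesis using Fb[OF opt(1) False] unfolding L2_def by simp
  qed
  have L3b: "L3 T dl D S h' t' istar \<le> mu Dist D istar"
  proof -
    have "Mset dl h' t' istar \<subseteq> Mset dl h' \<tau> istar" by (rule Mset_sub[OF pl]) (use \<tau> in simp)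
    then have "card (Mset dl h' t' istar) \<le> card (Mset dl h' \<tau> istar)"
      by (rule card_mono[rotated]) (rule finite_subset[OF _ plays_finite], auto simp: Mset_def)
    then have m: "real (card (Mset dl h' t' istar)) \<le> 2 * dmean Dist D istar / real (card S) + 16 * ln (real T) + 2"
      using Gt[OF tau1 opt(1)] eqt act by simp
    have cS0: "0 < real (card S)" using cS by simp
    have "L3 T dl D S h' t' istar \<le> real (card S) / real D * (dmean Dist D istar / real (card S))"
      unfolding L3_def by (rule mult_left_mono) (use m in auto)
    also have "\<dots> = mu Dist D istar" using cS0 D1 by (simp add: dmean_def)
    finally show ?thesis .
  qed
  have LCBb: "LCB T dl D S h' t' istar \<le> mu Dist D istar"
    using L1b L2b L3b by (simp add: LCB_def)
  have UCBb: "mu Dist D istar \<le> UCB T dl D h' t' j" if j: "j \<in> S" for j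
  proof (cases "Fset D h' t' j = {}")
    case True
    have "mu Dist D istar \<le> sqrt (2 * ln (real T))" using mu1 lnT by linarith
    then show ?thesis using True by (simp add: UCB_def muF_def)
  next
    case False
    have "j \<in> {1..K}" using j invr by auto
    from Fb[OF this False] have "mu Dist D j \<le> UCB T dl D h' t' j" unfolding UCB_def by simp
    then show ?thesis using muj[OF j] by simp
  qed
  show ?thesis using LCBb UCBb B by fastforce
qed


theorem lemma3:
  fixes Dist :: "nat \<Rightarrow> nat pmf" and T K D :: nat and B :: real
    and dl :: "nat \<Rightarrow> nat \<Rightarrow> nat" and enum :: "nat set \<Rightarrow> nat list" and istar :: nat
  assumes "K \<ge> 1" and "D \<ge> 1"
    and supp: "\<And>i. i \<in> {1..K} \<Longrightarrow> set_pmf (Dist i) \<subseteq> {0..D}"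
    and real: "\<And>s i. i \<in> {1..K} \<Longrightarrow> dl s i \<in> set_pmf (Dist i)"
    and enum: "\<And>S. finite S \<Longrightarrow> distinct (enum S) \<and> set (enum S) = S"
    and opt: "istar \<in> {1..K}" "\<And>i. i \<in> {1..K} \<Longrightarrow> i \<noteq> istar \<Longrightarrow> mu Dist D istar < mu Dist D i"
    and G: "event_G Dist T K D B dl enum"
    and B: "B \<ge> mu Dist D istar"
  shows "\<forall>r. \<not> st_failed (cse_state T K D B dl enum r)
            \<and> istar \<in> st_set (cse_state T K D B dl enum r)"
proof
  fix r
  show "\<not> st_failed (cse_state T K D B dl enum r) \<and> istar \<in> st_set (cse_state T K D B dl enum r)"
  proof (induction r)
    case 0
    then show ?case using opt(1) by (simp add: st_failed_def st_set_def)
  next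
    case (Suc r)
    from state_Suc_cases[of T K D B dl enum r] show ?case
    proof
      assume "cse_state T K D B dl enum (Suc r) = cse_state T K D B dl enum r"
      then show ?thesis using Suc by simp
    next
      assume "\<exists>t S h f. cse_state T K D B dl enum r = (t,S,h,f) \<and> \<not> f \<and> t < T \<and>
        cse_state T K D B dl enum (Suc r) = cse_step T D B dl enum (t,S,h,f)"
      then obtain t S h f where e: "cse_state T K D B dl enum r = (t,S,h,f)" and f: "\<not> f" and tT: "t < T"
        and s: "cse_state T K D B dl enum (Suc r) = cse_step T D B dl enum (t,S,h,f)" by blast
      have e': "cse_state T K D B dl enum r = (t,S,h,False)" using e f by simp
      have ist: "istar \<in> S" using Suc e by (simp add: st_set_def)
      have nf: "\<And>y. y \<le> r \<Longrightarrow> \<not> st_failed (cse_state T K D B dl enum y)"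
        using failed_mono Suc by blast
      define h' where "h' = (\<lambda>s. if t \<le> s \<and> s < t + card S \<and> s \<le> T then Some (enum S ! (s - t)) else h s)"
      define t' where "t' = t + card S"
      have R: "\<forall>j\<in>S. LCB T dl D S h' t' istar \<le> min (UCB T dl D h' t' j) B"
        unfolding h'_def t'_def
        by (rule round[OF assms(1,2) supp opt G B e' tT ist nf])
      define S' where "S' = {i \<in> S. \<not> (\<exists>j\<in>S. min (UCB T dl D h' t' j) B < LCB T dl D S h' t' i)}"
      have "istar \<in> S'" unfolding S'_def using R ist by (auto simp: not_less)
      then have "cse_state T K D B dl enum (Suc r) = (t', S', h', False)"
        unfolding s f step_unfold Let_def h'_def t'_def S'_def
        by (auto simp del: cse_state.simps)
      then show ?thesis using \<open>istar \<in> S'\<close> by (simp add: st_failed_def st_set_def)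
    qed
  qed
qed

end
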